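(* Let $\rho$ be an increasing continuous function on $[0,\infty)$, continuously differentiable on $(0,\infty)$, with $\lim_{x\to0}\rho'(x)=0$. Then for all sufficiently small positive $x$ and $x^*$ with $x<x^*$, setting $z=(1-\rho(x))e^{ix}$, we have $2|e^{ix^*}-z|\ge\rho(x^* )$. *)

theory Defs
  imports "HOL-Analysis.Analysis"
begin

end

theory Submission
  imports Defs
begin

lemma sin_lb:
  fixes t :: real
  assumes a: "0 \<le> t" "t \<le> 1"
  shows "sin t \<ge> t/3"
proof -
  have "\<bar>sin t - (\<Sum>m<3. sin_coeff m * t ^ m)\<bar> \<le> inverse (fact 3) * \<bar>t\<bar> ^ 3"
    by (rule Maclaurin_sin_bound)
  moreover have "(\<Sum>m<3. sin_coeff m * t ^ m) = t"
    by (simp add: eval_nat_numeral sin_coeff_def)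
  moreover have "t^3 \<le> t"
  proof -
    have "t*t \<le> 1" using a by (simp add: mult_le_one)
    then have "t*t*t \<le> 1*t" using a by (intro mult_right_mono)
    then show ?thesis by (simp add: power3_eq_cube)
  qed
  ultimately have "\<bar>sin t - t\<bar> * 6 \<le> t" using a by (simp add: fact_numeral)
  then show ?thesis by (simp add: abs_if split: if_splits)
qed
lemma cos_lb: "cos (t::real) \<ge> 1 - t^2/2"
proof -
  have "cos t = 1 - 2 * (sin (t/2))^2" using cos_double_sin[of "t/2"] by simp
  moreover have "(sin (t/2))^2 \<le> (t/2)^2" using abs_sin_x_le_abs_x[of "t/2"]
    by (metis abs_ge_zero power2_abs power_mono)
  ultimately show ?thesis by (simp add: power_divide)
qed

lemma cmod_key:
  fixes a x xs :: real
  shows "cmod (exp (\<i> * complex_of_real xs) - complex_of_real (1 - a) * exp (\<i> * complex_of_real x))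
     = sqrt ((cos (xs - x) - (1 - a))^2 + (sin (xs - x))^2)"
proof -
  let ?r = "1 - a"
  have "exp (\<i> * complex_of_real xs) - complex_of_real ?r * exp (\<i> * complex_of_real x)
     = exp (\<i> * complex_of_real x) * (exp (\<i> * complex_of_real (xs - x)) - complex_of_real ?r)"
    by (simp add: algebra_simps flip: exp_add)
  hence "cmod (exp (\<i> * complex_of_real xs) - complex_of_real ?r * exp (\<i> * complex_of_real x))
     = cmod (exp (\<i> * complex_of_real (xs - x)) - complex_of_real ?r)"
    by (simp add: norm_mult)
  also have "exp (\<i> * complex_of_real (xs - x)) - complex_of_real ?r = Complex (cos (xs - x) - ?r) (sin (xs - x))"
    by (simp add: complex_eq_iff Re_exp Im_exp)
  also have "cmod \<dots> = sqrt ((cos (xs - x) - ?r)^2 + (sin (xs - x))^2)"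
    by (simp add: cmod_def)
  finally show ?thesis .
qed

lemma real_key:
  fixes a d t :: real
  assumes t: "0 < t" "t \<le> 1/2" and d: "0 \<le> d" "d \<le> t/3"
  shows "2 * sqrt ((cos t - (1 - a))^2 + (sin t)^2) \<ge> a + d"
proof -
  let ?Q = "(cos t - (1 - a))^2 + (sin t)^2"
  have s: "sin t \<ge> t/3" using sin_lb[of t] t by simp
  have c: "cos t \<ge> 7/8"
  proof -
    have "t^2 \<le> (1/2)^2" using t by (intro power_mono) auto
    then have "t^2 \<le> 1/4" by (simp add: power_divide)
    then show ?thesis using cos_lb[of t] by linarith
  qed
  have c1: "cos t \<le> 1" by simp
  have sq1: "sqrt ?Q \<ge> sin t" by (rule real_le_rsqrt) simp
  have sq2: "sqrt ?Q \<ge> cos t - (1 - a)" by (rule real_le_rsqrt) simp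
  show ?thesis
  proof (cases "a \<le> 1")
    case True
    have "?Q - a^2 = 2 * (1 - a) * (1 - cos t)"
      using sin_cos_squared_add[of t] by (simp add: power2_eq_square algebra_simps)
    moreover have "2 * (1 - a) * (1 - cos t) \<ge> 0" using True c1 by simp
    ultimately have "?Q \<ge> a^2" by linarith
    hence "sqrt ?Q \<ge> \<bar>a\<bar>" using real_sqrt_le_mono real_sqrt_abs by metis
    then show ?thesis using sq1 s d by linarith
  next
    case False
    then show ?thesis using sq2 c d t by linarith
  qed
qed

theorem mainTheorem12:
  fixes \<rho> :: "real \<Rightarrow> real"
  assumes mono: "mono_on {0..} \<rho>"
    and cont: "continuous_on {0..} \<rho>"
    and diff: "\<rho> differentiable_on {0<..}"
    and cont_deriv: "continuous_on {0<..} (deriv \<rho>)"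
    and lim: "(deriv \<rho> \<longlongrightarrow> 0) (at_right 0)"
  shows "\<exists>\<delta>>0. \<forall>x xs. 0 < x \<longrightarrow> x < xs \<longrightarrow> xs < \<delta> \<longrightarrow>
           (let z = complex_of_real (1 - \<rho> x) * exp (\<i> * complex_of_real x)
            in 2 * cmod (exp (\<i> * complex_of_real xs) - z) \<ge> \<rho> xs)"
proof -
  have "eventually (\<lambda>y. dist (deriv \<rho> y) 0 < 1/3) (at_right (0::real))"
    using tendstoD[OF lim, of "1/3"] by simp
  then obtain e where e: "e > 0" and he: "\<And>y. 0 < y \<Longrightarrow> y < e \<Longrightarrow> \<bar>deriv \<rho> y\<bar> < 1/3"
    unfolding eventually_at_right_field by auto
  have dall: "\<And>y. 0 < y \<Longrightarrow> DERIV \<rho> y :> deriv \<rho> y"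
    using diff differentiable_on_eq_differentiable_at[of "{0<..}" \<rho>]
    by (simp add: DERIV_deriv_iff_real_differentiable)
  show ?thesis
  proof (intro exI[of _ "min e (1/2)"] conjI allI impI)
    show "0 < min e (1/2::real)" using e by simp
    fix x xs :: real
    assume x: "0 < x" and xxs: "x < xs" and xsd: "xs < min e (1/2)"
    obtain z where z: "x < z" "z < xs" and eq: "\<rho> xs - \<rho> x = (xs - x) * deriv \<rho> z"
      using MVT2[OF xxs, of \<rho> "deriv \<rho>"] dall x by force
    have "\<bar>deriv \<rho> z\<bar> < 1/3" using he z x xsd by simp
    hence "(xs - x) * deriv \<rho> z \<le> (xs - x) * (1/3)" using xxs
      by (intro mult_left_mono) auto
    hence d1: "\<rho> xs - \<rho> x \<le> (xs - x)/3" using eq by simp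
    have d0: "0 \<le> \<rho> xs - \<rho> x" using mono x xxs by (simp add: mono_on_def)
    have "\<rho> x + (\<rho> xs - \<rho> x) \<le> 2 * sqrt ((cos (xs - x) - (1 - \<rho> x))^2 + (sin (xs - x))^2)"
      by (rule real_key) (use x xxs xsd d0 d1 in auto)
    then show "let z = complex_of_real (1 - \<rho> x) * exp (\<i> * complex_of_real x)
            in 2 * cmod (exp (\<i> * complex_of_real xs) - z) \<ge> \<rho> xs"
      unfolding Let_def cmod_key by simp
  qed
qed

end
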